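(* For every instance of the single-processor carbon-aware scheduling problem that admits a valid schedule, there exists an optimal (minimum carbon cost) valid schedule that is an $\mathcal{E}$-schedule, i.e., in which every block starts or ends at a time belonging to $\mathcal{E}=\{b_1=0,e_1=b_2,\dots,e_{J-1}=b_J,e_J=T\}$.
   Context: Single-processor carbon-aware scheduling problem. All quantities are nonnegative integers. One processor must execute tasks $v_1,\dots,v_n$ in this fixed order; task $v_i$ has duration $\omega(v_i)\ge 1$. The horizon $[0,T)$ is partitioned into $J$ consecutive intervals $I_j=[b_j,e_j)$, $1\le j\le J$, with $b_1=0$, $e_j=b_{j+1}$, $e_J=T$, each with a constant green power budget $\mathcal{G}_j\ge 0$ per time unit. The processor consumes idle power $P_{\mathrm{idle}}$ at every time unit, plus working power $P_{\mathrm{work}}$ at every time unit during which it executes a task. A (valid) schedule is an assignment of integer start times $\sigma(v_i)$ with $\sigma(v_1)\ge 0$, $\sigma(v_{i+1})\ge \sigma(v_i)+\omega(v_i)$ for $1\le i<n$, and $\sigma(v_n)+\omega(v_n)\le T$. The processor is active at integer time $t$ iff $\sigma(v_i)\le t<\sigma(v_i)+\omega(v_i)$ for some $i$; the power at $t$ is $\mathcal{P}(t)=P_{\mathrm{idle}}+P_{\mathrm{work}}$ if active and $P_{\mathrm{idle}}$ otherwise. The total carbon cost is $\mathcal{CC}=\sum_{t=0}^{T-1}\max(\mathcal{P}(t)-\mathcal{G}_{j(t)},0)$, where $t\in I_{j(t)}$. A block of a schedule is a maximal set of consecutive tasks $v_r,\dots,v_s$ ($r\le s$) executed without idle time between them,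 i.e., $\sigma(v_{i+1})=\sigma(v_i)+\omega(v_i)$ for $r\le i<s$, with idle time (or the horizon boundary) immediately before $v_r$ and immediately after $v_s$. A block starts at $\sigma(v_r)$ and ends at $\sigma(v_s)+\omega(v_s)$. *)

theory Defs
  imports Main
begin

(* Tasks are indexed 0..n-1 (v_{i+1} is task i), durations w i.
   Intervals are indexed 0..J-1: interval j is [b j, b (Suc j)), b 0 = 0, b J = T,
   with green budget G j. *)

definition valid_intervals :: "nat \<Rightarrow> (nat \<Rightarrow> nat) \<Rightarrow> nat \<Rightarrow> bool" where
  "valid_intervals J b T \<longleftrightarrow> J \<ge> 1 \<and> b 0 = 0 \<and> b J = T \<and> (\<forall>j<J. b j < b (Suc j))"

definition valid_schedule :: "nat \<Rightarrow> (nat \<Rightarrow> nat) \<Rightarrow> nat \<Rightarrow> (nat \<Rightarrow> nat) \<Rightarrow> bool" where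
  "valid_schedule n w T \<sigma> \<longleftrightarrow>
     (\<forall>i. Suc i < n \<longrightarrow> \<sigma> (Suc i) \<ge> \<sigma> i + w i) \<and>
     (n \<ge> 1 \<longrightarrow> \<sigma> (n - 1) + w (n - 1) \<le> T)"

definition active :: "nat \<Rightarrow> (nat \<Rightarrow> nat) \<Rightarrow> (nat \<Rightarrow> nat) \<Rightarrow> nat \<Rightarrow> bool" where
  "active n w \<sigma> t \<longleftrightarrow> (\<exists>i<n. \<sigma> i \<le> t \<and> t < \<sigma> i + w i)"

definition power :: "nat \<Rightarrow> (nat \<Rightarrow> nat) \<Rightarrow> (nat \<Rightarrow> nat) \<Rightarrow> nat \<Rightarrow> nat \<Rightarrow> nat \<Rightarrow> nat" where
  "power n w \<sigma> Pidle Pwork t = (if active n w \<sigma> t then Pidle + Pwork else Pidle)"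

(* index of the interval containing t (for t < T = b J) *)
definition interval_of :: "nat \<Rightarrow> (nat \<Rightarrow> nat) \<Rightarrow> nat \<Rightarrow> nat" where
  "interval_of J b t = (THE j. j < J \<and> b j \<le> t \<and> t < b (Suc j))"

definition carbon_cost ::
  "nat \<Rightarrow> (nat \<Rightarrow> nat) \<Rightarrow> nat \<Rightarrow> (nat \<Rightarrow> nat) \<Rightarrow> (nat \<Rightarrow> nat) \<Rightarrow> nat \<Rightarrow> nat \<Rightarrow> nat \<Rightarrow> (nat \<Rightarrow> nat) \<Rightarrow> nat" where
  "carbon_cost n w J b G T Pidle Pwork \<sigma> =
     (\<Sum>t<T. (power n w \<sigma> Pidle Pwork t) - G (interval_of J b t))"
  (* natural-number subtraction truncates at 0, i.e. it is max(P(t) - G, 0) *)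

definition block_start :: "(nat \<Rightarrow> nat) \<Rightarrow> (nat \<Rightarrow> nat) \<Rightarrow> nat \<Rightarrow> bool" where
  "block_start w \<sigma> i \<longleftrightarrow> i = 0 \<or> \<sigma> i > \<sigma> (i - 1) + w (i - 1)"

definition block_end :: "nat \<Rightarrow> (nat \<Rightarrow> nat) \<Rightarrow> (nat \<Rightarrow> nat) \<Rightarrow> nat \<Rightarrow> bool" where
  "block_end n w \<sigma> i \<longleftrightarrow> Suc i = n \<or> \<sigma> (Suc i) > \<sigma> i + w i"

definition is_block :: "nat \<Rightarrow> (nat \<Rightarrow> nat) \<Rightarrow> (nat \<Rightarrow> nat) \<Rightarrow> nat \<Rightarrow> nat \<Rightarrow> bool" where
  "is_block n w \<sigma> r s \<longleftrightarrow> r \<le> s \<and> s < n \<and> block_start w \<sigma> r \<and> block_end n w \<sigma> s \<and>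
     (\<forall>i. r \<le> i \<and> i < s \<longrightarrow> \<sigma> (Suc i) = \<sigma> i + w i)"

definition E_set :: "nat \<Rightarrow> (nat \<Rightarrow> nat) \<Rightarrow> nat set" where
  "E_set J b = b ` {0..J}"

definition E_schedule :: "nat \<Rightarrow> (nat \<Rightarrow> nat) \<Rightarrow> nat \<Rightarrow> (nat \<Rightarrow> nat) \<Rightarrow> (nat \<Rightarrow> nat) \<Rightarrow> bool" where
  "E_schedule n w J b \<sigma> \<longleftrightarrow>
     (\<forall>r s. is_block n w \<sigma> r s \<longrightarrow> \<sigma> r \<in> E_set J b \<or> \<sigma> s + w s \<in> E_set J b)"

end

theory Submission
  imports Defs
begin

lemma vs_step:
  assumes "valid_schedule n w T \<sigma>" "i < j" "j < n"
  shows "\<sigma> i + w i \<le> \<sigma> j"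
  using assms(2,3)
proof (induction j)
  case 0 then show ?case by simp
next
  case (Suc j)
  have st: "\<sigma> (Suc j) \<ge> \<sigma> j + w j" using assms(1) Suc.prems unfolding valid_schedule_def by auto
  show ?case
  proof (cases "i = j")
    case True then show ?thesis using st by simp
  next
    case False then have "\<sigma> i + w i \<le> \<sigma> j" using Suc by auto
    then show ?thesis using st by simp
  qed
qed

lemma vs_mono:
  assumes "valid_schedule n w T \<sigma>" "i \<le> j" "j < n"
  shows "\<sigma> i \<le> \<sigma> j"
  using vs_step[OF assms(1), of i j] assms by (cases "i = j") auto

lemma vs_end:
  assumes "valid_schedule n w T \<sigma>" "i < n"
  shows "\<sigma> i + w i \<le> T"
proof -
  have l: "\<sigma> (n-1) + w (n-1) \<le> T" using assms unfolding valid_schedule_def by auto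
  show ?thesis
  proof (cases "i = n - 1")
    case True then show ?thesis using l by simp
  next
    case False
    then have "\<sigma> i + w i \<le> \<sigma> (n-1)" using vs_step[OF assms(1), of i "n-1"] assms(2) by auto
    then show ?thesis using l by simp
  qed
qed

lemma b_mono_strict:
  assumes "valid_intervals J b T" "i < j" "j \<le> J"
  shows "b i < b j"
  using assms(2,3)
proof (induction j)
  case 0 then show ?case by simp
next
  case (Suc j)
  have "b j < b (Suc j)" using assms(1) Suc.prems unfolding valid_intervals_def by auto
  then show ?case using Suc by (cases "i = j") auto
qed

lemma b_mono:
  assumes "valid_intervals J b T" "i \<le> j" "j \<le> J"
  shows "b i \<le> b j"
  using b_mono_strict[OF assms(1), of i j] assms by (cases "i = j") auto

lemma iv_unique:
  assumes "valid_intervals J b T" "j < J" "b j \<le> t" "t < b (Suc j)"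
  shows "interval_of J b t = j"
  unfolding interval_of_def
proof (rule the_equality)
  show "j < J \<and> b j \<le> t \<and> t < b (Suc j)" using assms by simp
next
  fix j' assume h: "j' < J \<and> b j' \<le> t \<and> t < b (Suc j')"
  show "j' = j"
  proof (rule ccontr)
    assume "j' \<noteq> j"
    then consider "j < j'" | "j' < j" by linarith
    then show False
    proof cases
      case 1 then have "b (Suc j) \<le> b j'" using b_mono[OF assms(1), of "Suc j" j'] h by auto
      then show False using h assms by linarith
    next
      case 2 then have "b (Suc j') \<le> b j" using b_mono[OF assms(1), of "Suc j'" j] assms by auto
      then show False using h assms by linarith
    qed
  qed
qed

lemma iv_exists_aux:
  assumes "valid_intervals J b T" "k \<le> J" "t < b k"
  shows "\<exists>j<k. b j \<le> t \<and> t < b (Suc j)"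
  using assms(2,3)
proof (induction k)
  case 0 then show ?case using assms(1) unfolding valid_intervals_def by simp
next
  case (Suc k)
  show ?case
  proof (cases "t < b k")
    case True
    then obtain j where "j<k" "b j \<le> t \<and> t < b (Suc j)" using Suc.IH Suc.prems by auto
    then show ?thesis by (intro exI[of _ j]) auto
  next
    case False then show ?thesis using Suc.prems by (intro exI[of _ k]) auto
  qed
qed

lemma iv_same:
  assumes "valid_intervals J b T" "x \<notin> E_set J b" "1 \<le> x" "x < T"
  shows "interval_of J b (x - 1) = interval_of J b x"
proof -
  have "x - 1 < b J" using assms unfolding valid_intervals_def by auto
  then obtain j where j: "j < J" "b j \<le> x - 1" "x - 1 < b (Suc j)"
    using iv_exists_aux[OF assms(1), of J "x-1"] by auto
  have "x \<noteq> b (Suc j)" using assms(2) j(1) unfolding E_set_def by auto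
  then have "x < b (Suc j)" using j by linarith
  then show ?thesis using iv_unique[OF assms(1) j] iv_unique[OF assms(1) j(1), of x] j by simp
qed

lemma cover:
  fixes \<tau> w :: "nat \<Rightarrow> nat"
  assumes "r \<le> s" "\<forall>i. r \<le> i \<and> i < s \<longrightarrow> \<tau> (Suc i) = \<tau> i + w i"
  shows "\<tau> r \<le> \<tau> s \<and> ((\<exists>i. r \<le> i \<and> i \<le> s \<and> \<tau> i \<le> t \<and> t < \<tau> i + w i) \<longleftrightarrow> (\<tau> r \<le> t \<and> t < \<tau> s + w s))"
  using assms
proof (induction s rule: dec_induct)
  case base then show ?case by auto
next
  case (step s)
  then have IH: "\<tau> r \<le> \<tau> s \<and> ((\<exists>i. r \<le> i \<and> i \<le> s \<and> \<tau> i \<le> t \<and> t < \<tau> i + w i) \<longleftrightarrow> (\<tau> r \<le> t \<and> t < \<tau> s + w s))" by auto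
  have eq: "\<tau> (Suc s) = \<tau> s + w s" using step by auto
  have "(\<exists>i. r \<le> i \<and> i \<le> Suc s \<and> \<tau> i \<le> t \<and> t < \<tau> i + w i) \<longleftrightarrow>
        (\<exists>i. r \<le> i \<and> i \<le> s \<and> \<tau> i \<le> t \<and> t < \<tau> i + w i) \<or> (\<tau> (Suc s) \<le> t \<and> t < \<tau> (Suc s) + w (Suc s))"
    using step.hyps(1) le_Suc_eq le_SucI by blast
  then show ?case using IH eq by auto
qed

definition cc :: "nat \<Rightarrow> (nat \<Rightarrow> nat) \<Rightarrow> (nat \<Rightarrow> nat) \<Rightarrow> nat \<Rightarrow> nat \<Rightarrow> nat \<Rightarrow> nat" where
  "cc J b G Pi Pw t = (Pi + Pw - G (interval_of J b t)) - (Pi - G (interval_of J b t))"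

lemma cost_split:
  assumes "e' \<le> T" "\<forall>t. a' \<le> t \<and> t < e' \<longrightarrow> \<not> B t"
    "\<forall>t. active n w \<tau> t \<longleftrightarrow> B t \<or> (a' \<le> t \<and> t < e')"
  shows "carbon_cost n w J b G T Pi Pw \<tau> =
    (\<Sum>t<T. (if B t then Pi+Pw else Pi) - G (interval_of J b t)) + (\<Sum>t\<in>{a'..<e'}. cc J b G Pi Pw t)"
proof -
  have fe: "{a'..<e'} = {t \<in> {..<T}. a' \<le> t \<and> t < e'}" using assms(1) by auto
  then have s: "(\<Sum>t\<in>{a'..<e'}. cc J b G Pi Pw t) = (\<Sum>t<T. if a' \<le> t \<and> t < e' then cc J b G Pi Pw t else 0)"
    using sum.inter_filter[of "{..<T}" "cc J b G Pi Pw" "\<lambda>t. a' \<le> t \<and> t < e'"] fe by simp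
  show ?thesis unfolding s carbon_cost_def power_def sum.distrib[symmetric]
    by (rule sum.cong) (use assms(2,3) in \<open>auto simp: cc_def\<close>)
qed

lemma active_split:
  assumes "s < n" "r \<le> s"
  shows "active n w \<tau> t \<longleftrightarrow> (\<exists>i<n. (i<r \<or> s<i) \<and> \<tau> i \<le> t \<and> t < \<tau> i + w i) \<or>
     (\<exists>i. r \<le> i \<and> i \<le> s \<and> \<tau> i \<le> t \<and> t < \<tau> i + w i)"
proof
  assume "active n w \<tau> t"
  then obtain i where "i < n" "\<tau> i \<le> t" "t < \<tau> i + w i" unfolding active_def by blast
  then show "(\<exists>i<n. (i<r \<or> s<i) \<and> \<tau> i \<le> t \<and> t < \<tau> i + w i) \<or>
     (\<exists>i. r \<le> i \<and> i \<le> s \<and> \<tau> i \<le> t \<and> t < \<tau> i + w i)"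
    by (cases "i < r \<or> s < i") (auto simp: not_less)
next
  assume "(\<exists>i<n. (i<r \<or> s<i) \<and> \<tau> i \<le> t \<and> t < \<tau> i + w i) \<or>
     (\<exists>i. r \<le> i \<and> i \<le> s \<and> \<tau> i \<le> t \<and> t < \<tau> i + w i)"
  then show "active n w \<tau> t" unfolding active_def using assms
    by (meson le_less_trans)
qed

lemma sum_shift:
  fixes c :: "nat \<Rightarrow> nat"
  assumes "1 \<le> a" "a < e" "c (a-1) = c a" "c (e-1) = c e"
  shows "sum c {a-1..<e-1} + sum c {a+1..<e+1} = 2 * sum c {a..<e}"
proof -
  define a0 where "a0 = a - 1"
  define e0 where "e0 = e - 1"
  have ae: "a = Suc a0" "e = Suc e0" using assms unfolding a0_def e0_def by auto
  have "a0 < e0" using ae assms by simp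
  have c1: "c a0 = c (Suc a0)" using assms(3) ae by simp
  have c2: "c e0 = c (Suc e0)" using assms(4) ae by simp
  have 1: "sum c {a0..<e0} = c a0 + sum c {Suc a0..<e0}" using \<open>a0 < e0\<close> by (rule sum.atLeast_Suc_lessThan)
  have 2: "sum c {Suc a0..<Suc e0} = sum c {Suc a0..<e0} + c e0" using \<open>a0 < e0\<close> by (intro sum.atLeastLessThan_Suc) simp
  have 3: "sum c {Suc a0..<Suc e0} = c (Suc a0) + sum c {Suc (Suc a0)..<Suc e0}" using \<open>a0 < e0\<close> by (intro sum.atLeast_Suc_lessThan) simp
  have 4: "sum c {Suc (Suc a0)..<Suc (Suc e0)} = sum c {Suc (Suc a0)..<Suc e0} + c (Suc e0)" using \<open>a0 < e0\<close> by (intro sum.atLeastLessThan_Suc) simp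
  have "sum c {a0..<e0} + sum c {Suc (Suc a0)..<Suc (Suc e0)} = 2 * sum c {Suc a0..<Suc e0}"
    using 1 2 3 4 c1 c2 by linarith
  moreover have "a - 1 = a0" "e - 1 = e0" "a + 1 = Suc (Suc a0)" "e + 1 = Suc (Suc e0)" using ae by auto
  ultimately show ?thesis using ae by simp
qed


theorem lemma1:
  fixes n J T Pidle Pwork :: nat and w b G :: "nat \<Rightarrow> nat"
  assumes "\<forall>i<n. w i \<ge> 1"
    and "valid_intervals J b T"
    and "\<exists>\<sigma>. valid_schedule n w T \<sigma>"
  shows "\<exists>\<sigma>. valid_schedule n w T \<sigma> \<and> E_schedule n w J b \<sigma> \<and>
           (\<forall>\<sigma>'. valid_schedule n w T \<sigma>' \<longrightarrow>
              carbon_cost n w J b G T Pidle Pwork \<sigma> \<le> carbon_cost n w J b G T Pidle Pwork \<sigma>')"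
proof -
  let ?C = "carbon_cost n w J b G T Pidle Pwork"
  obtain k where "valid_schedule n w T k" using assms(3) by blast
  then have "\<exists>x. valid_schedule n w T x \<and> (\<forall>y. valid_schedule n w T y \<longrightarrow> ?C x \<le> ?C y)"
    by (rule ex_has_least_nat[of "valid_schedule n w T" k "carbon_cost n w J b G T Pidle Pwork"])
  then obtain \<sigma>0 where v0: "valid_schedule n w T \<sigma>0"
    and min0: "\<forall>\<sigma>'. valid_schedule n w T \<sigma>' \<longrightarrow> ?C \<sigma>0 \<le> ?C \<sigma>'"
    by blast
  have "valid_schedule n w T \<sigma>0 \<and> ?C \<sigma>0 = ?C \<sigma>0" using v0 by simp
  then have "\<exists>x. (valid_schedule n w T x \<and> ?C x = ?C \<sigma>0) \<and>
      (\<forall>y. valid_schedule n w T y \<and> ?C y = ?C \<sigma>0 \<longrightarrow> (\<Sum>i<n. x i) \<le> (\<Sum>i<n. y i))"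
    by (rule ex_has_least_nat[of "\<lambda>x. valid_schedule n w T x \<and> ?C x = ?C \<sigma>0" \<sigma>0 "\<lambda>x. \<Sum>i<n. x i"])
  then obtain \<sigma> where v: "valid_schedule n w T \<sigma>" and c: "?C \<sigma> = ?C \<sigma>0"
    and minsum: "\<forall>\<sigma>'. valid_schedule n w T \<sigma>' \<and> ?C \<sigma>' = ?C \<sigma>0 \<longrightarrow> (\<Sum>i<n. \<sigma> i) \<le> (\<Sum>i<n. \<sigma>' i)"
    by blast
  have opt: "\<forall>\<sigma>'. valid_schedule n w T \<sigma>' \<longrightarrow> ?C \<sigma> \<le> ?C \<sigma>'" using min0 c by simp
  have E: "E_schedule n w J b \<sigma>"
    unfolding E_schedule_def
  proof (intro allI impI)
    fix r s assume blk: "is_block n w \<sigma> r s"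
    show "\<sigma> r \<in> E_set J b \<or> \<sigma> s + w s \<in> E_set J b"
    proof (rule ccontr)
      assume nE: "\<not> (\<sigma> r \<in> E_set J b \<or> \<sigma> s + w s \<in> E_set J b)"
      define a where "a = \<sigma> r"
      define e where "e = \<sigma> s + w s"
      have rs: "r \<le> s" "s < n" and bs: "block_start w \<sigma> r" and be: "block_end n w \<sigma> s"
        and eqs: "\<forall>i. r \<le> i \<and> i < s \<longrightarrow> \<sigma> (Suc i) = \<sigma> i + w i"
        using blk unfolding is_block_def by auto
      have aE: "a \<notin> E_set J b" and eE: "e \<notin> E_set J b" using nE a_def e_def by auto
      have "0 \<in> E_set J b" "T \<in> E_set J b" using assms(2) unfolding E_set_def valid_intervals_def
        by (auto intro: image_eqI[of _ _ 0] image_eqI[of _ _ J])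
      then have a1: "1 \<le> a" using aE by (cases a) auto
      have "e \<le> T" using vs_end[OF v rs(2)] e_def by simp
      then have eT: "e < T" using eE \<open>T \<in> E_set J b\<close> by (cases "e = T") auto
      have ws: "w s \<ge> 1" using assms(1) rs by auto
      have ae: "a < e" using vs_mono[OF v rs(1) rs(2)] ws a_def e_def by simp
      have pos: "\<forall>i. r \<le> i \<and> i \<le> s \<longrightarrow> 1 \<le> \<sigma> i" 
      proof (intro allI impI)
        fix i assume i: "r \<le> i \<and> i \<le> s"
        then have "\<sigma> r \<le> \<sigma> i" using vs_mono[OF v, of r i] rs by simp
        then show "1 \<le> \<sigma> i" using a1 a_def by simp
      qed
      have bs': "0 < r \<Longrightarrow> \<sigma> (r-1) + w (r-1) < a" using bs a_def unfolding block_start_def by auto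
      have be': "Suc s < n \<Longrightarrow> e < \<sigma> (Suc s)" using be e_def unfolding block_end_def by auto
      define \<sigma>L where "\<sigma>L = (\<lambda>i. if r \<le> i \<and> i \<le> s then \<sigma> i - 1 else \<sigma> i)"
      define \<sigma>R where "\<sigma>R = (\<lambda>i. if r \<le> i \<and> i \<le> s then \<sigma> i + 1 else \<sigma> i)"
      have vstep: "\<And>i. Suc i < n \<Longrightarrow> \<sigma> (Suc i) \<ge> \<sigma> i + w i" using v unfolding valid_schedule_def by auto
      have vL: "valid_schedule n w T \<sigma>L"
        unfolding valid_schedule_def
      proof (intro conjI allI impI)
        fix i assume i: "Suc i < n"
        show "\<sigma>L i + w i \<le> \<sigma>L (Suc i)"
        proof (cases "r \<le> i \<and> i < s")
          case True then show ?thesis using eqs pos unfolding \<sigma>L_def by auto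
        next
          case F: False
          show ?thesis
          proof (cases "i = s")
            case True then show ?thesis using vstep[OF i] unfolding \<sigma>L_def by auto
          next
            case False
            show ?thesis
            proof (cases "Suc i = r")
              case True then show ?thesis using bs' a_def unfolding \<sigma>L_def by auto
            next
              case False
              then show ?thesis using vstep[OF i] F \<open>i \<noteq> s\<close> unfolding \<sigma>L_def by auto
            qed
          qed
        qed
      next
        assume "n \<ge> 1"
        then show "\<sigma>L (n - 1) + w (n - 1) \<le> T" using vs_end[OF v, of "n-1"] unfolding \<sigma>L_def by auto
      qed
      have vR: "valid_schedule n w T \<sigma>R"
        unfolding valid_schedule_def
      proof (intro conjI allI impI)
        fix i assume i: "Suc i < n"
        show "\<sigma>R i + w i \<le> \<sigma>R (Suc i)"
        proof (cases "r \<le> i \<and> i < s")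
          case True then show ?thesis using eqs unfolding \<sigma>R_def by auto
        next
          case F: False
          show ?thesis
          proof (cases "i = s")
            case True then show ?thesis using be'[of] i e_def rs unfolding \<sigma>R_def by auto
          next
            case False
            show ?thesis
            proof (cases "Suc i = r")
              case True then show ?thesis using vstep[OF i] unfolding \<sigma>R_def by auto
            next
              case False
              then show ?thesis using vstep[OF i] F \<open>i \<noteq> s\<close> unfolding \<sigma>R_def by auto
            qed
          qed
        qed
      next
        assume "n \<ge> 1"
        show "\<sigma>R (n - 1) + w (n - 1) \<le> T"
        proof (cases "r \<le> n - 1 \<and> n - 1 \<le> s")
          case True then have "n - 1 = s" using rs by auto
          then show ?thesis using eT e_def unfolding \<sigma>R_def by auto
        next
          case False then show ?thesis using vs_end[OF v, of "n-1"] \<open>n \<ge> 1\<close> unfolding \<sigma>R_def by auto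
        qed
      qed
      define B where "B = (\<lambda>t. \<exists>i<n. (i<r \<or> s<i) \<and> \<sigma> i \<le> t \<and> t < \<sigma> i + w i)"
      have disj: "\<forall>t. a - 1 \<le> t \<and> t < e + 1 \<longrightarrow> \<not> B t"
      proof (intro allI impI notI)
        fix t assume t: "a - 1 \<le> t \<and> t < e + 1" and "B t"
        then obtain i where i: "i < n" "i < r \<or> s < i" "\<sigma> i \<le> t" "t < \<sigma> i + w i" unfolding B_def by blast
        show False
        proof (cases "i < r")
          case True
          have "\<sigma> i + w i \<le> \<sigma> (r-1) + w (r-1)"
          proof (cases "i = r - 1")
            case False then have "\<sigma> i + w i \<le> \<sigma> (r-1)" using vs_step[OF v, of i "r-1"] True rs by auto
            then show ?thesis by simp
          qed simp
          then show ?thesis using bs' True t i by auto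
        next
          case False
          then have "s < i" using i by auto
          then have "\<sigma> (Suc s) \<le> \<sigma> i" using vs_mono[OF v, of "Suc s" i] i by auto
          then show ?thesis using be' \<open>s < i\<close> i t by auto
        qed
      qed
      have BL: "\<And>t. (\<exists>i<n. (i<r \<or> s<i) \<and> \<sigma>L i \<le> t \<and> t < \<sigma>L i + w i) = B t"
        unfolding B_def
        by (intro arg_cong[where f=Ex] ext) (auto simp: \<sigma>L_def)
      have BR: "\<And>t. (\<exists>i<n. (i<r \<or> s<i) \<and> \<sigma>R i \<le> t \<and> t < \<sigma>R i + w i) = B t"
        unfolding B_def
        by (intro arg_cong[where f=Ex] ext) (auto simp: \<sigma>R_def)
      have eqL: "\<forall>i. r \<le> i \<and> i < s \<longrightarrow> \<sigma>L (Suc i) = \<sigma>L i + w i"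
        using eqs pos unfolding \<sigma>L_def by auto
      have eqR: "\<forall>i. r \<le> i \<and> i < s \<longrightarrow> \<sigma>R (Suc i) = \<sigma>R i + w i"
        using eqs unfolding \<sigma>R_def by auto
      have actS: "\<forall>t. active n w \<sigma> t \<longleftrightarrow> B t \<or> (a \<le> t \<and> t < e)"
      proof
        fix t
        show "active n w \<sigma> t \<longleftrightarrow> B t \<or> (a \<le> t \<and> t < e)"
          using active_split[OF rs(2) rs(1), of w \<sigma> t] cover[OF rs(1) eqs, of t]
          unfolding B_def a_def e_def by simp
      qed
      have sL: "\<sigma>L r = a - 1" "\<sigma>L s + w s = e - 1" using rs pos a_def e_def unfolding \<sigma>L_def by auto
      have sR: "\<sigma>R r = a + 1" "\<sigma>R s + w s = e + 1" using rs a_def e_def unfolding \<sigma>R_def by auto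
      have "\<forall>t. active n w \<sigma>L t \<longleftrightarrow> B t \<or> (\<sigma>L r \<le> t \<and> t < \<sigma>L s + w s)"
      proof
        fix t
        show "active n w \<sigma>L t \<longleftrightarrow> B t \<or> (\<sigma>L r \<le> t \<and> t < \<sigma>L s + w s)"
          using active_split[OF rs(2) rs(1), of w \<sigma>L t] cover[OF rs(1) eqL, of t] BL[of t] by simp
      qed
      then have actL: "\<forall>t. active n w \<sigma>L t \<longleftrightarrow> B t \<or> (a - 1 \<le> t \<and> t < e - 1)"
        unfolding sL by simp
      have "\<forall>t. active n w \<sigma>R t \<longleftrightarrow> B t \<or> (\<sigma>R r \<le> t \<and> t < \<sigma>R s + w s)"
      proof
        fix t
        show "active n w \<sigma>R t \<longleftrightarrow> B t \<or> (\<sigma>R r \<le> t \<and> t < \<sigma>R s + w s)"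
          using active_split[OF rs(2) rs(1), of w \<sigma>R t] cover[OF rs(1) eqR, of t] BR[of t] by simp
      qed
      then have actR: "\<forall>t. active n w \<sigma>R t \<longleftrightarrow> B t \<or> (a + 1 \<le> t \<and> t < e + 1)"
        unfolding sR by simp
      let ?X = "\<Sum>t<T. (if B t then Pidle+Pwork else Pidle) - G (interval_of J b t)"
      let ?c = "cc J b G Pidle Pwork"
      have CS: "?C \<sigma> = ?X + sum ?c {a..<e}"
        by (rule cost_split) (use eT disj actS in auto)
      have CL: "?C \<sigma>L = ?X + sum ?c {a-1..<e-1}"
        by (rule cost_split) (use eT disj actL in auto)
      have CR: "?C \<sigma>R = ?X + sum ?c {a+1..<e+1}"
        by (rule cost_split) (use eT disj actR in auto)
      have c1: "?c (a-1) = ?c a" using iv_same[OF assms(2) aE a1] ae eT unfolding cc_def by simp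
      have c2: "?c (e-1) = ?c e" using iv_same[OF assms(2) eE _ eT] ae unfolding cc_def by simp
      have "sum ?c {a-1..<e-1} + sum ?c {a+1..<e+1} = 2 * sum ?c {a..<e}"
        by (rule sum_shift[OF a1 ae c1 c2])
      moreover have "?C \<sigma> \<le> ?C \<sigma>L" "?C \<sigma> \<le> ?C \<sigma>R" using opt vL vR by auto
      ultimately have "?C \<sigma>L = ?C \<sigma>0" using CS CL CR c by linarith
      then have le: "(\<Sum>i<n. \<sigma> i) \<le> (\<Sum>i<n. \<sigma>L i)" using minsum[rule_format, OF conjI[OF vL]] by simp
      have "(\<Sum>i<n. \<sigma>L i) < (\<Sum>i<n. \<sigma> i)"
      proof (rule sum_strict_mono_ex1)
        show "\<forall>x\<in>{..<n}. \<sigma>L x \<le> \<sigma> x" unfolding \<sigma>L_def by auto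
        show "\<exists>x\<in>{..<n}. \<sigma>L x < \<sigma> x" using rs pos unfolding \<sigma>L_def
          by (intro bexI[of _ r]) auto
      qed simp
      then show False using le by simp
    qed
  qed
  show ?thesis using v E opt by (intro exI[of _ \<sigma>]) simp
qed

end
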